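(* Let $V$ be a vector space and $U_1,U_2,U_3\subset V$ subspaces. Put $U=U_1\times U_2\times U_3\subset X=V\times V\times V$ and $Y=\{(v,v,v):v\in V\}\subset X$. Then $X=U+Y$ if and only if $V=U_1+(U_2\cap U_3)=U_2+(U_3\cap U_1)=U_3+(U_1\cap U_2)$. *)

theory Defs
  imports Complex_Main "HOL-Library.Product_Plus"
begin

definition setsum_sp :: "'b::ab_group_add set \<Rightarrow> 'b set \<Rightarrow> 'b set" where
  "setsum_sp A B = {a + b | a b. a \<in> A \<and> b \<in> B}"

end

theory Submission
  imports Defs
begin

lemma sub_props:
  fixes scale :: "'a::field \<Rightarrow> 'b::ab_group_add \<Rightarrow> 'b"
  assumes vs: "vector_space scale" and s: "module.subspace scale U"
  shows "0 \<in> U" "\<And>x y. x \<in> U \<Longrightarrow> y \<in> U \<Longrightarrow> x + y \<in> U"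
    "\<And>x. x \<in> U \<Longrightarrow> - x \<in> U" "\<And>x y. x \<in> U \<Longrightarrow> y \<in> U \<Longrightarrow> x - y \<in> U"
proof -
  interpret vector_space scale by fact
  show "0 \<in> U" using s by (simp add: subspace_def)
  show A: "\<And>x y. x \<in> U \<Longrightarrow> y \<in> U \<Longrightarrow> x + y \<in> U" using s by (simp add: subspace_def)
  show N: "\<And>x. x \<in> U \<Longrightarrow> - x \<in> U" using s by (simp add: subspace_neg)
  show "\<And>x y. x \<in> U \<Longrightarrow> y \<in> U \<Longrightarrow> x - y \<in> U"
    using A N by (metis diff_conv_add_uminus)
qed

theorem lemma6p2:
  fixes scale :: "'a::field \<Rightarrow> 'b::ab_group_add \<Rightarrow> 'b"
    and U1 U2 U3 :: "'b set"
  assumes vs: "vector_space scale"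
    and s1: "module.subspace scale U1"
    and s2: "module.subspace scale U2"
    and s3: "module.subspace scale U3"
  shows "(setsum_sp (U1 \<times> U2 \<times> U3) {(v, v, v) | v. True} = (UNIV :: ('b \<times> 'b \<times> 'b) set))
     \<longleftrightarrow> (setsum_sp U1 (U2 \<inter> U3) = UNIV \<and> setsum_sp U2 (U3 \<inter> U1) = UNIV
          \<and> setsum_sp U3 (U1 \<inter> U2) = UNIV)"
proof
  note p1 = sub_props[OF vs s1] and p2 = sub_props[OF vs s2] and p3 = sub_props[OF vs s3]
  assume H: "setsum_sp (U1 \<times> U2 \<times> U3) {(v, v, v) | v. True} = UNIV"
  have g: "\<And>x y z. (x,y,z) \<in> setsum_sp (U1 \<times> U2 \<times> U3) {(v, v, v) | v. True}"
    using H by simp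
  have g2: "\<And>x y z. \<exists>u1 u2 u3 v. u1 \<in> U1 \<and> u2 \<in> U2 \<and> u3 \<in> U3 \<and> x = u1+v \<and> y = u2+v \<and> z = u3+v"
  proof -
    fix x y z
    obtain a b where ab: "(x,y,z) = a + b" "a \<in> U1 \<times> U2 \<times> U3" "b \<in> {(v, v, v) | v. True}"
      using g[of x y z] unfolding setsum_sp_def by blast
    obtain v where bv: "b = (v,v,v)" using ab(3) by blast
    obtain u1 u2 u3 where au: "a = (u1,u2,u3)" by (cases a) auto
    show "?thesis x y z" using ab au bv by auto
  qed
  have "setsum_sp U1 (U2 \<inter> U3) = UNIV"
  proof -
    { fix x obtain u1 u2 u3 v where "u1 \<in> U1" "u2 \<in> U2" "u3 \<in> U3" "x = u1+v" "0 = u2+v" "0 = u3+v"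
        using g2[of x 0 0] by blast
      hence "v = - u2" "v = - u3" by (metis add.commute eq_neg_iff_add_eq_0)+
      hence "v \<in> U2 \<inter> U3" using \<open>u2 \<in> U2\<close> \<open>u3 \<in> U3\<close> p2(3) p3(3) by simp
      hence "x \<in> setsum_sp U1 (U2 \<inter> U3)" unfolding setsum_sp_def
        using \<open>x = u1 + v\<close> \<open>u1 \<in> U1\<close> by blast }
    thus ?thesis by auto
  qed
  moreover have "setsum_sp U2 (U3 \<inter> U1) = UNIV"
  proof -
    { fix x obtain u1 u2 u3 v where "u1 \<in> U1" "u2 \<in> U2" "u3 \<in> U3" "0 = u1+v" "x = u2+v" "0 = u3+v"
        using g2[of 0 x 0] by blast
      hence "v = - u3" "v = - u1" by (metis add.commute eq_neg_iff_add_eq_0)+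
      hence "v \<in> U3 \<inter> U1" using \<open>u3 \<in> U3\<close> \<open>u1 \<in> U1\<close> p3(3) p1(3) by simp
      hence "x \<in> setsum_sp U2 (U3 \<inter> U1)" unfolding setsum_sp_def
        using \<open>x = u2 + v\<close> \<open>u2 \<in> U2\<close> by blast }
    thus ?thesis by auto
  qed
  moreover have "setsum_sp U3 (U1 \<inter> U2) = UNIV"
  proof -
    { fix x obtain u1 u2 u3 v where "u1 \<in> U1" "u2 \<in> U2" "u3 \<in> U3" "0 = u1+v" "0 = u2+v" "x = u3+v"
        using g2[of 0 0 x] by blast
      hence "v = - u1" "v = - u2" by (metis add.commute eq_neg_iff_add_eq_0)+
      hence "v \<in> U1 \<inter> U2" using \<open>u1 \<in> U1\<close> \<open>u2 \<in> U2\<close> p1(3) p2(3) by simp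
      hence "x \<in> setsum_sp U3 (U1 \<inter> U2)" unfolding setsum_sp_def
        using \<open>x = u3 + v\<close> \<open>u3 \<in> U3\<close> by blast }
    thus ?thesis by auto
  qed
  ultimately show "setsum_sp U1 (U2 \<inter> U3) = UNIV \<and> setsum_sp U2 (U3 \<inter> U1) = UNIV
          \<and> setsum_sp U3 (U1 \<inter> U2) = UNIV" by blast
next
  note p1 = sub_props[OF vs s1] and p2 = sub_props[OF vs s2] and p3 = sub_props[OF vs s3]
  assume H: "setsum_sp U1 (U2 \<inter> U3) = UNIV \<and> setsum_sp U2 (U3 \<inter> U1) = UNIV
          \<and> setsum_sp U3 (U1 \<inter> U2) = UNIV"
  have A: "\<And>x. \<exists>s r. s \<in> U1 \<and> r \<in> U2 \<inter> U3 \<and> x = s + r"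
    proof -
    fix x have "x \<in> setsum_sp U1 (U2 \<inter> U3)" using H by simp
    thus "?thesis x" unfolding setsum_sp_def by blast
  qed
  have B: "\<And>x. \<exists>p q. p \<in> U2 \<and> q \<in> U3 \<inter> U1 \<and> x = p + q"
    proof -
    fix x have "x \<in> setsum_sp U2 (U3 \<inter> U1)" using H by simp
    thus "?thesis x" unfolding setsum_sp_def by blast
  qed
  { fix a b c :: 'b
    obtain p q where pq: "p \<in> U2" "q \<in> U3 \<inter> U1" "b - c = p + q" using B by blast
    obtain s r where sr: "s \<in> U1" "r \<in> U2 \<inter> U3" "a - c = s + r" using A by blast
    define v where "v = c + q + r"
    have e: "a - v = s - q" "b - v = p - r" "c - v = - (q + r)"
      using pq(3) sr(3) unfolding v_def by (simp_all add: algebra_simps eq_diff_eq)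
    have "s - q \<in> U1" using p1(4) sr(1) pq(2) by blast
    moreover have "p - r \<in> U2" using p2(4) pq(1) sr(2) by blast
    moreover have "- (q + r) \<in> U3" using p3(2) p3(3) pq(2) sr(2) by blast
    ultimately have m: "(a - v, b - v, c - v) \<in> U1 \<times> U2 \<times> U3" using e by simp
    have "(a,b,c) = (a - v, b - v, c - v) + (v,v,v)" by simp
    hence "(a,b,c) \<in> setsum_sp (U1 \<times> U2 \<times> U3) {(v, v, v) | v. True}"
      unfolding setsum_sp_def using m by blast }
  thus "setsum_sp (U1 \<times> U2 \<times> U3) {(v, v, v) | v. True} = UNIV" by auto
qed

end
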